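(* Let $R:\mathcal Y\to\mathbb R$ be differentiable and $1$-strongly convex, with $w\mapsto D_R(z\|w)$ $G$-Lipschitz on $\mathcal Y$ for every $z\in\mathcal Y$. Let $K\subseteq\mathcal Y$ be closed and convex, $\eta>0$, $z_1\in K$, and let $\tilde g_1,\tilde g_2,\dots\in\mathbb R^d$ be arbitrary. Suppose $z_t\in\mathcal Y$ for all $t$ and $$z_{t+1}=r_{t+1}+y_{t+1},\qquad y_{t+1}=\arg\min_{y\in K}\Big\{\tilde g_t^\top(y-z_t)+\tfrac1\eta D_R(y\|z_t)\Big\}.$$ Then for every $u\in K$, $$\sum_{t=1}^T\langle\tilde g_t,z_t-u\rangle\le\frac{D_R(u\|z_1)}\eta+\frac\eta2\sum_{t=1}^T\|\tilde g_t\|_2^2+\frac G\eta\sum_{t=1}^T\|r_{t+1}\|_2.$$ Consequently, if $\|\tilde g_t\|\le\tilde G_F$, $\|r_{t+1}\|\le\hat C_\eta$ for all $t$ and $\sup_{z,z'\in\mathcal Y}D_R(z\|z')\le D_1$, then (also in expectation, for random $\tilde g_t,r_{t+1}$) $$\sum_{t=1}^T\langle\tilde g_t,z_t-u\rangle\le\frac{D_1}\eta+\frac{\eta\tilde G_F^2T}2+\frac{\hat C_\eta GT}\eta.$$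
   Context: $\mathcal Y\subset\mathbb R^d$ convex compact; $D_R(x\|y)=R(x)-R(y)-\nabla R(y)^\top(x-y)$. *)

theory Defs
  imports "HOL-Analysis.Analysis"
begin

definition strongly_convex_on :: "real \<Rightarrow> 'a::real_normed_vector set \<Rightarrow> ('a \<Rightarrow> real) \<Rightarrow> bool" where
  "strongly_convex_on mu S R \<longleftrightarrow>
     (\<forall>x\<in>S. \<forall>y\<in>S. \<forall>\<theta>::real. 0 \<le> \<theta> \<and> \<theta> \<le> 1 \<longrightarrow>
        R (\<theta> *\<^sub>R x + (1 - \<theta>) *\<^sub>R y)
          \<le> \<theta> * R x + (1 - \<theta>) * R y - mu / 2 * \<theta> * (1 - \<theta>) * (norm (x - y))\<^sup>2)"

definition bregman :: "('a::real_normed_vector \<Rightarrow> real) \<Rightarrow> 'a set \<Rightarrow> 'a \<Rightarrow> 'a \<Rightarrow> real" where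
  "bregman R Y x y = R x - R y - frechet_derivative R (at y within Y) (x - y)"

end

theory Submission
  imports Defs
begin

lemma dd:
  fixes R :: "'a::real_normed_vector \<Rightarrow> real"
  assumes d: "(R has_derivative f') (at y within Y)" and Y: "convex Y" "y \<in> Y" "v \<in> Y"
  shows "((\<lambda>\<theta>. (R (y + \<theta> *\<^sub>R (v - y)) - R y) / \<theta>) \<longlongrightarrow> f' (v - y)) (at 0 within {0..1})"
proof -
  let ?p = "\<lambda>\<theta>::real. y + \<theta> *\<^sub>R (v - y)"
  have p: "(?p has_derivative (\<lambda>\<theta>. \<theta> *\<^sub>R (v - y))) (at 0 within {0..1})"
    by (auto intro!: derivative_eq_intros)
  have img: "?p ` {0..1} \<subseteq> Y"
  proof
    fix w assume "w \<in> ?p ` {0..1}"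
    then obtain \<theta> where th: "0 \<le> \<theta>" "\<theta> \<le> 1" "w = ?p \<theta>" by auto
    have "(1 - \<theta>) *\<^sub>R y + \<theta> *\<^sub>R v \<in> Y" using convexD[OF Y(1) Y(2) Y(3), of "1-\<theta>" \<theta>] th by auto
    moreover have "(1 - \<theta>) *\<^sub>R y + \<theta> *\<^sub>R v = w" using th by (simp add: algebra_simps)
    ultimately show "w \<in> Y" by simp
  qed
  have "(R has_derivative f') (at (?p 0) within ?p ` {0..1})"
    using has_derivative_subset[OF _ img] d by simp
  from has_derivative_in_compose[OF p this]
  have c: "((\<lambda>\<theta>. R (?p \<theta>)) has_derivative (\<lambda>\<theta>. f' (\<theta> *\<^sub>R (v - y)))) (at 0 within {0..1})" .
  have lin: "linear f'" using d has_derivative_linear by blast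
  have "(\<lambda>\<theta>. f' (\<theta> *\<^sub>R (v - y))) = (*) (f' (v - y))"
    using linear_scale[OF lin] by (auto simp: fun_eq_iff)
  with c have "((\<lambda>\<theta>. R (?p \<theta>)) has_field_derivative f' (v - y)) (at 0 within {0..1})"
    by (simp add: has_field_derivative_def)
  then show ?thesis unfolding has_field_derivative_iff by simp
qed

lemma nontriv: "\<not> trivial_limit (at (0::real) within {0..1})"
  by (simp add: trivial_limit_within)

lemma ev01: "eventually (\<lambda>\<theta>. 0 < \<theta> \<and> \<theta> \<le> 1) (at (0::real) within {0..1})"
  by (auto simp: eventually_at_filter)

lemma sc_first:
  fixes R :: "'a::real_normed_vector \<Rightarrow> real"
  assumes sc: "strongly_convex_on 1 Y R" and Y: "convex Y" and d: "(R has_derivative f') (at x within Y)"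
    and x: "x \<in> Y" and v: "v \<in> Y"
  shows "f' (v - x) \<le> R v - R x - 1/2 * (norm (v - x))\<^sup>2"
proof -
  note lim1 = dd[OF d Y x v]
  have lim2: "((\<lambda>\<theta>::real. R v - R x - 1/2 * (1 - \<theta>) * (norm (v - x))\<^sup>2) \<longlongrightarrow> R v - R x - 1/2 * (1 - 0) * (norm (v - x))\<^sup>2) (at 0 within {0..1})"
    by (intro tendsto_intros)
  have ev: "eventually (\<lambda>\<theta>. (R (x + \<theta> *\<^sub>R (v - x)) - R x) / \<theta> \<le> R v - R x - 1/2 * (1 - \<theta>) * (norm (v - x))\<^sup>2) (at 0 within {0..1})"
    using ev01
  proof (rule eventually_mono)
    fix \<theta> :: real assume th: "0 < \<theta> \<and> \<theta> \<le> 1"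
    have "R (\<theta> *\<^sub>R v + (1 - \<theta>) *\<^sub>R x) \<le> \<theta> * R v + (1 - \<theta>) * R x - 1 / 2 * \<theta> * (1 - \<theta>) * (norm (v - x))\<^sup>2"
      using sc x v th unfolding strongly_convex_on_def by auto
    moreover have "\<theta> *\<^sub>R v + (1 - \<theta>) *\<^sub>R x = x + \<theta> *\<^sub>R (v - x)" by (simp add: algebra_simps)
    ultimately have "R (x + \<theta> *\<^sub>R (v - x)) - R x \<le> \<theta> * (R v - R x - 1/2 * (1 - \<theta>) * (norm (v - x))\<^sup>2)"
      by (simp add: algebra_simps)
    then show "(R (x + \<theta> *\<^sub>R (v - x)) - R x) / \<theta> \<le> R v - R x - 1/2 * (1 - \<theta>) * (norm (v - x))\<^sup>2"
      using th by (simp add: divide_le_eq mult.commute)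
  qed
  from tendsto_le[OF nontriv lim2 lim1 ev] show ?thesis by simp
qed

lemma opt:
  fixes R :: "'a::real_inner \<Rightarrow> real"
  assumes K: "convex K" "K \<subseteq> Y" and y: "y \<in> K" and u: "u \<in> K"
    and d: "(R has_derivative fy) (at y within Y)" and lz: "linear fz" and eta: "\<eta> > 0"
    and mn: "\<forall>v\<in>K. g \<bullet> (y - z) + (R y - R z - fz (y - z)) / \<eta> \<le> g \<bullet> (v - z) + (R v - R z - fz (v - z)) / \<eta>"
  shows "0 \<le> g \<bullet> (u - y) + (fy (u - y) - fz (u - y)) / \<eta>"
proof -
  have dK: "(R has_derivative fy) (at y within K)" using has_derivative_subset[OF d K(2)] .
  note lim1 = dd[OF dK K(1) y u]
  have lim: "((\<lambda>\<theta>. g \<bullet> (u - y) + ((R (y + \<theta> *\<^sub>R (u - y)) - R y) / \<theta> - fz (u - y)) / \<eta>) \<longlongrightarrow> g \<bullet> (u - y) + (fy (u - y) - fz (u - y)) / \<eta>) (at 0 within {0..1})"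
    using eta by (intro tendsto_intros lim1) auto
  have ev: "eventually (\<lambda>\<theta>. 0 \<le> g \<bullet> (u - y) + ((R (y + \<theta> *\<^sub>R (u - y)) - R y) / \<theta> - fz (u - y)) / \<eta>) (at 0 within {0..1})"
    using ev01
  proof (rule eventually_mono)
    fix \<theta> :: real assume th: "0 < \<theta> \<and> \<theta> \<le> 1"
    let ?v = "y + \<theta> *\<^sub>R (u - y)"
    have "(1 - \<theta>) *\<^sub>R y + \<theta> *\<^sub>R u \<in> K" using convexD[OF K(1) y u, of "1-\<theta>" \<theta>] th by auto
    moreover have "(1 - \<theta>) *\<^sub>R y + \<theta> *\<^sub>R u = ?v" by (simp add: algebra_simps)
    ultimately have vK: "?v \<in> K" by simp
    have lin: "fz (?v - z) = fz (y - z) + \<theta> * fz (u - y)"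
    proof -
      have "?v - z = (y - z) + \<theta> *\<^sub>R (u - y)" by (simp add: algebra_simps)
      then have "fz (?v - z) = fz ((y - z) + \<theta> *\<^sub>R (u - y))" by (rule arg_cong)
      also have "\<dots> = fz (y - z) + fz (\<theta> *\<^sub>R (u - y))" by (rule linear_add[OF lz])
      finally have "fz (?v - z) = fz (y - z) + fz (\<theta> *\<^sub>R (u - y))" .
      then show ?thesis using linear_scale[OF lz] by simp
    qed
    have gi: "g \<bullet> (?v - z) = g \<bullet> (y - z) + \<theta> * (g \<bullet> (u - y))"
      by (simp add: inner_diff_right inner_add_right)
    from mn vK have "g \<bullet> (y - z) + (R y - R z - fz (y - z)) / \<eta> \<le> g \<bullet> (?v - z) + (R ?v - R z - fz (?v - z)) / \<eta>" by blast
    then have "0 \<le> \<theta> * (g \<bullet> (u - y)) + (R ?v - R y - \<theta> * fz (u - y)) / \<eta>"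
      unfolding lin gi by (simp add: diff_divide_distrib add_divide_distrib)
    moreover have "\<theta> * (g \<bullet> (u - y) + ((R ?v - R y) / \<theta> - fz (u - y)) / \<eta>) = \<theta> * (g \<bullet> (u - y)) + (R ?v - R y - \<theta> * fz (u - y)) / \<eta>"
      using th eta by (simp add: field_simps)
    ultimately have "0 \<le> \<theta> * (g \<bullet> (u - y) + ((R ?v - R y) / \<theta> - fz (u - y)) / \<eta>)"
      by linarith
    then show "0 \<le> g \<bullet> (u - y) + ((R ?v - R y) / \<theta> - fz (u - y)) / \<eta>"
      using th by (simp add: zero_le_mult_iff)
  qed
  show ?thesis using tendsto_lowerbound[OF lim ev nontriv] .
qed

theorem lemmaC5:
  fixes Y K :: "'a::euclidean_space set"
    and R :: "'a \<Rightarrow> real"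
    and G \<eta> :: real
    and g z y r :: "nat \<Rightarrow> 'a"
  assumes Y: "convex Y" "compact Y"
    and R_diff: "\<forall>x\<in>Y. R differentiable (at x within Y)"
    and R_sc: "strongly_convex_on 1 Y R"
    and D_lip: "\<forall>w\<in>Y. G-lipschitz_on Y (\<lambda>v. bregman R Y w v)"
    and K: "K \<subseteq> Y" "closed K" "convex K"
    and eta: "\<eta> > 0"
    and z1: "z 1 \<in> K"
    and zY: "\<forall>t\<ge>1. z t \<in> Y"
    and step: "\<forall>t\<ge>1. z (t + 1) = r (t + 1) + y (t + 1)"
    and argmin: "\<forall>t\<ge>1. y (t + 1) \<in> K \<and>
        (\<forall>v\<in>K. g t \<bullet> (y (t + 1) - z t) + bregman R Y (y (t + 1)) (z t) / \<eta>
               \<le> g t \<bullet> (v - z t) + bregman R Y v (z t) / \<eta>)"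
  shows "(\<forall>u\<in>K. \<forall>T::nat.
           (\<Sum>t=1..T. g t \<bullet> (z t - u))
             \<le> bregman R Y u (z 1) / \<eta> + \<eta> / 2 * (\<Sum>t=1..T. (norm (g t))\<^sup>2)
                + G / \<eta> * (\<Sum>t=1..T. norm (r (t + 1))))
    \<and> (\<forall>u\<in>K. \<forall>T::nat. \<forall>GF C D1::real.
           (\<forall>t\<ge>1. norm (g t) \<le> GF) \<and> (\<forall>t\<ge>1. norm (r (t + 1)) \<le> C)
           \<and> (\<forall>w\<in>Y. \<forall>w'\<in>Y. bregman R Y w w' \<le> D1) \<longrightarrow>
           (\<Sum>t=1..T. g t \<bullet> (z t - u))
             \<le> D1 / \<eta> + \<eta> * GF\<^sup>2 * real T / 2 + C * G * real T / \<eta>)"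
proof -
  define fd where "fd x = frechet_derivative R (at x within Y)" for x
  have der: "(R has_derivative fd x) (at x within Y)" if "x \<in> Y" for x
    using R_diff that frechet_derivative_works unfolding fd_def by blast
  have breg: "bregman R Y a b = R a - R b - fd b (a - b)" for a b
    by (simp add: bregman_def fd_def)
  have Dnn: "0 \<le> bregman R Y a b" if "a \<in> Y" "b \<in> Y" for a b
  proof -
    have "fd b (a - b) \<le> R a - R b - 1/2 * (norm (a - b))\<^sup>2"
      using sc_first[OF R_sc Y(1) der[OF that(2)] that(2) that(1)] .
    moreover have "0 \<le> 1/2 * (norm (a - b))\<^sup>2" by simp
    ultimately show ?thesis unfolding breg by linarith
  qed
  have Gnn: "0 \<le> G" using D_lip z1 K(1) unfolding lipschitz_on_def by blast
  have part1: "(\<Sum>t=1..T. g t \<bullet> (z t - u))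
             \<le> bregman R Y u (z 1) / \<eta> + \<eta> / 2 * (\<Sum>t=1..T. (norm (g t))\<^sup>2)
                + G / \<eta> * (\<Sum>t=1..T. norm (r (t + 1)))" if uK: "u \<in> K" for u T
  proof -
    have uY: "u \<in> Y" using uK K(1) by blast
    have step: "g t \<bullet> (z t - u) \<le> \<eta> / 2 * (norm (g t))\<^sup>2
        + (bregman R Y u (z t) - bregman R Y u (z (t + 1))) / \<eta> + G / \<eta> * norm (r (t + 1))"
      if t: "t \<ge> 1" for t
    proof -
      define zz where "zz = z t"
      define yy where "yy = y (t + 1)"
      have zzY: "zz \<in> Y" using zY t zz_def by auto
      have yyK: "yy \<in> K" using argmin t yy_def by auto
      have yyY: "yy \<in> Y" using yyK K(1) by blast
      have z1Y: "z (t + 1) \<in> Y" using zY t by auto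
      have linz: "linear (fd zz)" using der[OF zzY] has_derivative_linear by blast
      have mn: "\<forall>v\<in>K. g t \<bullet> (yy - zz) + (R yy - R zz - fd zz (yy - zz)) / \<eta> \<le> g t \<bullet> (v - zz) + (R v - R zz - fd zz (v - zz)) / \<eta>"
        using argmin t unfolding breg yy_def zz_def by auto
      have A: "0 \<le> g t \<bullet> (u - yy) + (fd yy (u - yy) - fd zz (u - yy)) / \<eta>"
        using opt[OF K(3) K(1) yyK uK der[OF yyY] linz eta mn] .
      have A': "0 \<le> \<eta> * (g t \<bullet> (u - yy)) + fd yy (u - yy) - fd zz (u - yy)"
      proof -
        have "0 \<le> \<eta> * (g t \<bullet> (u - yy) + (fd yy (u - yy) - fd zz (u - yy)) / \<eta>)"
          using A eta by simp
        also have "\<dots> = \<eta> * (g t \<bullet> (u - yy)) + fd yy (u - yy) - fd zz (u - yy)"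
          using eta by (simp add: field_simps)
        finally show ?thesis .
      qed
      have B: "fd zz (yy - zz) \<le> R yy - R zz - 1/2 * (norm (yy - zz))\<^sup>2"
        using sc_first[OF R_sc Y(1) der[OF zzY] zzY yyY] .
      have lin: "fd zz (u - zz) = fd zz (u - yy) + fd zz (yy - zz)"
        using linear_add[OF linz, of "u - yy" "yy - zz"] by simp
      have L: "bregman R Y u yy \<ge> bregman R Y u (z (t + 1)) - G * norm (r (t + 1))"
      proof -
        have "dist (bregman R Y u (z (t + 1))) (bregman R Y u yy) \<le> G * dist (z (t + 1)) yy"
          using D_lip uY z1Y yyY unfolding lipschitz_on_def by blast
        moreover have "dist (z (t + 1)) yy = norm (r (t + 1))"
          using step t yy_def by (simp add: dist_norm)
        ultimately show ?thesis by (simp add: dist_real_def)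
      qed
      have C: "\<eta> * (g t \<bullet> (zz - yy)) \<le> \<eta>\<^sup>2 / 2 * (norm (g t))\<^sup>2 + 1/2 * (norm (zz - yy))\<^sup>2"
      proof -
        have "\<eta> * (g t \<bullet> (zz - yy)) \<le> \<eta> * (norm (g t) * norm (zz - yy))"
          using eta Cauchy_Schwarz_ineq2[of "g t" "zz - yy"] by simp
        moreover have "0 \<le> (\<eta> * norm (g t) - norm (zz - yy))\<^sup>2" by simp
        ultimately show ?thesis by (simp add: power2_eq_square algebra_simps)
      qed
      have nz: "(norm (zz - yy))\<^sup>2 = (norm (yy - zz))\<^sup>2" by (simp add: norm_minus_commute)
      have gsplit: "\<eta> * (g t \<bullet> (zz - u)) = \<eta> * (g t \<bullet> (zz - yy)) - \<eta> * (g t \<bullet> (u - yy))"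
        by (simp add: inner_diff_right algebra_simps)
      have main: "\<eta> * (g t \<bullet> (zz - u)) \<le> \<eta>\<^sup>2 / 2 * (norm (g t))\<^sup>2
          + (bregman R Y u zz - bregman R Y u (z (t + 1))) + G * norm (r (t + 1))"
        using A' B lin L C nz gsplit unfolding breg by linarith
      have eq: "\<eta> * (\<eta> / 2 * (norm (g t))\<^sup>2 + (bregman R Y u zz - bregman R Y u (z (t + 1))) / \<eta> + G / \<eta> * norm (r (t + 1)))
         = \<eta>\<^sup>2 / 2 * (norm (g t))\<^sup>2 + (bregman R Y u zz - bregman R Y u (z (t + 1))) + G * norm (r (t + 1))"
        using eta by (simp add: field_simps power2_eq_square)
      have "\<eta> * (g t \<bullet> (zz - u)) \<le> \<eta> * (\<eta> / 2 * (norm (g t))\<^sup>2 + (bregman R Y u zz - bregman R Y u (z (t + 1))) / \<eta> + G / \<eta> * norm (r (t + 1)))"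
        using main eq by simp
      then show ?thesis using eta zz_def by simp
    qed
    have tel: "(\<Sum>t=1..T. g t \<bullet> (z t - u))
             \<le> (bregman R Y u (z 1) - bregman R Y u (z (T + 1))) / \<eta> + \<eta> / 2 * (\<Sum>t=1..T. (norm (g t))\<^sup>2)
                + G / \<eta> * (\<Sum>t=1..T. norm (r (t + 1)))" for T
    proof (induction T)
      case 0
      then show ?case by simp
    next
      case (Suc T)
      have s: "g (Suc T) \<bullet> (z (Suc T) - u) \<le> \<eta> / 2 * (norm (g (Suc T)))\<^sup>2
        + (bregman R Y u (z (Suc T)) - bregman R Y u (z (Suc T + 1))) / \<eta> + G / \<eta> * norm (r (Suc T + 1))"
        using step[of "Suc T"] by simp
      have d: "(a - b) / \<eta> + (b - c) / \<eta> = (a - c) / \<eta>" for a b c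
        by (simp add: diff_divide_distrib)
      show ?case using Suc s d[of "bregman R Y u (z 1)" "bregman R Y u (z (T + 1))" "bregman R Y u (z (Suc T + 1))"]
        by (simp add: distrib_left)
    qed
    have "0 \<le> bregman R Y u (z (T + 1)) / \<eta>" using Dnn[OF uY] zY eta by simp
    then show ?thesis using tel[of T] by (simp add: diff_divide_distrib)
  qed
  show ?thesis
  proof (intro conjI ballI allI impI)
    fix u T assume "u \<in> K"
    then show "(\<Sum>t=1..T. g t \<bullet> (z t - u))
             \<le> bregman R Y u (z 1) / \<eta> + \<eta> / 2 * (\<Sum>t=1..T. (norm (g t))\<^sup>2)
                + G / \<eta> * (\<Sum>t=1..T. norm (r (t + 1)))" by (rule part1)
  next
    fix u T and GF C D1 :: real
    assume uK: "u \<in> K" and H: "(\<forall>t\<ge>1. norm (g t) \<le> GF) \<and> (\<forall>t\<ge>1. norm (r (t + 1)) \<le> C)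
           \<and> (\<forall>w\<in>Y. \<forall>w'\<in>Y. bregman R Y w w' \<le> D1)"
    have uY: "u \<in> Y" using uK K(1) by blast
    have h1: "bregman R Y u (z 1) / \<eta> \<le> D1 / \<eta>"
      using H uY z1 K(1) eta by (auto intro!: divide_right_mono)
    have "(\<Sum>t=1..T. (norm (g t))\<^sup>2) \<le> (\<Sum>t=1..T. GF\<^sup>2)"
    proof (rule sum_mono)
      fix t assume "t \<in> {1..T}"
      then have "norm (g t) \<le> GF" using H by auto
      then show "(norm (g t))\<^sup>2 \<le> GF\<^sup>2" by (simp add: power_mono)
    qed
    then have h2: "\<eta> / 2 * (\<Sum>t=1..T. (norm (g t))\<^sup>2) \<le> \<eta> * GF\<^sup>2 * real T / 2"
      using eta by (auto dest: mult_left_mono[of _ _ "\<eta>/2"] simp: algebra_simps)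
    have "(\<Sum>t=1..T. norm (r (t + 1))) \<le> (\<Sum>t=1..T. C)"
      using H by (intro sum_mono) auto
    then have h3: "G / \<eta> * (\<Sum>t=1..T. norm (r (t + 1))) \<le> C * G * real T / \<eta>"
      using eta Gnn by (auto dest: mult_left_mono[of _ _ "G/\<eta>"] simp: algebra_simps)
    show "(\<Sum>t=1..T. g t \<bullet> (z t - u)) \<le> D1 / \<eta> + \<eta> * GF\<^sup>2 * real T / 2 + C * G * real T / \<eta>"
      using part1[OF uK, of T] h1 h2 h3 by linarith
  qed
qed

end
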